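(* For a positive integer $m$ let $M=\lfloor\frac{m-1}{2}\rfloor$ and define $$\widetilde{f_{m,1}}(z)=(-1)^M\int_0^z\frac{y^{2M+2}}{1+y^2}\,dy\qquad\big(z\in\mathbb{C}\setminus([i,i\infty)\cup[-i,-i\infty))\big),$$ the integral taken along the line segment from $0$ to $z$. Let $0<c<1<C$. Then, as $m\to\infty$, uniformly in $z$ with $\frac cm\le|z-i|\le\frac Cm$ and $z\notin[i,i\infty)$, $$\widetilde{f_{m,1}}(z)=\frac1{2i}\int_1^\infty\frac{e^{-\zeta}}{\zeta}\,d\zeta-\frac1{2i}\int_1^{im(z-i)}\frac{e^{-\zeta}}{\zeta}\,d\zeta+O\!\left(\frac{\ln m}{m}\right)=O(1),$$ where the path of the second integral lies in $\{\zeta\in\mathbb{C}\setminus(-\infty,0]:c\le|\zeta|\le C\}$. *)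

theory Defs
  imports "HOL-Complex_Analysis.Complex_Analysis"
begin

definition Mm :: "nat \<Rightarrow> nat" where
  "Mm m = (m - 1) div 2"

definition ftilde :: "nat \<Rightarrow> complex \<Rightarrow> complex" where
  "ftilde m z = (-1) ^ Mm m *
     contour_integral (linepath 0 z) (\<lambda>y. y ^ (2 * Mm m + 2) / (1 + y\<^sup>2))"

definition upper_ray :: "complex set" where
  "upper_ray = {\<i> * of_real t | t. t \<ge> 1}"

definition E1one :: real where
  "E1one = integral {1..} (\<lambda>t. exp (- t) / t)"

end

theory Submission
  imports Defs
begin


definition kk :: "nat \<Rightarrow> nat" where "kk m = 2 * Mm m + 2"

lemma kk_bounds: "m \<ge> 1 \<Longrightarrow> m \<le> kk m \<and> kk m \<le> m + 1"
  unfolding kk_def Mm_def by presburger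

lemma exp_ge_sq: "0 \<le> (t::real) \<Longrightarrow> t^2 \<le> 4 * exp t"
proof -
  assume t: "0 \<le> t"
  have "t/2 \<le> exp (t/2)" using exp_ge_add_one_self[of "t/2"] by linarith
  hence "(t/2)^2 \<le> exp (t/2) ^ 2" using t by (intro power_mono) auto
  also have "exp (t/2) ^ 2 = exp t" by (simp flip: exp_of_nat_mult)
  finally show ?thesis by (simp add: power_divide)
qed

lemma real_approx:
  fixes t :: real and m k :: nat
  assumes m: "m \<ge> 1" and k: "m \<le> k" "k \<le> m + 1" and t: "0 \<le> t" "t \<le> m"
  shows "\<bar>(1 - t/m)^k / (1 - t/(2*m)) - exp (-t)\<bar> \<le> 11 / m"
proof -
  define a where "a = 1 - t/m"
  have mpos: "(0::real) < m" using m by simp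
  have a0: "0 \<le> a" and a1: "a \<le> 1" using t mpos by (auto simp: a_def field_simps)
  have aexp: "a \<le> exp (-t/m)" using exp_ge_add_one_self[of "-t/m"] by (simp add: a_def)
  have akup: "a^j \<le> exp (-t)" if "m \<le> j" for j
  proof -
    have "a^j \<le> exp (-t/m)^j" by (intro power_mono aexp a0)
    also have "\<dots> = exp (- (j * t / m))" by (simp flip: exp_of_nat_mult)
    also have "\<dots> \<le> exp (-t)"
    proof -
      have "t \<le> j * t / m" using that t mpos by (simp add: field_simps mult_left_mono)
      thus ?thesis by simp
    qed
    finally show ?thesis .
  qed
  have sq: "0 \<le> 1 - (t/m)^2" using t mpos by (simp add: power_le_one)
  have "1 - t^2/m = 1 + real m * (-((t/m)^2))" using mpos by (simp add: power2_eq_square field_simps)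
  also have "\<dots> \<le> (1 + (-((t/m)^2)))^m"
    by (rule Bernoulli_inequality) (use sq in simp)
  also have "(1 + (-((t/m)^2))) = (1 + t/m) * a" by (simp add: a_def power2_eq_square algebra_simps)
  finally have b1: "1 - t^2/m \<le> ((1 + t/m) * a)^m" .
  have "((1 + t/m) * a)^m \<le> (exp (t/m) * a)^m"
    using exp_ge_add_one_self[of "t/m"] a0 t mpos by (intro power_mono mult_right_mono) auto
  also have "(exp (t/m) * a)^m = exp t * a^m"
    using mpos by (simp add: power_mult_distrib flip: exp_of_nat_mult)
  finally have low: "1 - t^2/m \<le> exp t * a^m" using b1 by linarith
  hence low2: "exp (-t) - exp (-t) * t^2/m \<le> a^m"
    by (simp add: exp_minus field_simps)
  have ak_low: "a^m - a^m * (t/m) \<le> a^k"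
  proof -
    have "a^(m+1) \<le> a^k" using k a0 a1 by (intro power_decreasing) auto
    moreover have "a^(m+1) = a^m - a^m * (t/m)" by (simp add: a_def algebra_simps)
    ultimately show ?thesis by simp
  qed
  have am_up: "a^m \<le> exp (-t)" using akup by simp
  have ak_up: "a^k \<le> exp (-t)" using akup k by simp
  have e1: "exp (-t) * t \<le> 1"
  proof -
    have "t \<le> exp t" using exp_ge_add_one_self[of t] by linarith
    thus ?thesis by (simp add: exp_minus field_simps)
  qed
  have e2: "exp (-t) * t^2 \<le> 4"
    using exp_ge_sq[OF t(1)] by (simp add: exp_minus field_simps)
  have "a^m * (t/m) \<le> exp (-t) * (t/m)" using am_up t mpos by (intro mult_right_mono) auto
  also have "\<dots> \<le> 1/m" using e1 mpos by (simp add: field_simps)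
  finally have x1: "a^m * (t/m) \<le> 1/m" .
  have x2: "exp (-t) * t^2/m \<le> 4/m" using e2 mpos by (simp add: divide_right_mono)
  have diff: "\<bar>a^k - exp (-t)\<bar> \<le> 5/m"
    using ak_up ak_low low2 x1 x2 by (simp add: abs_if field_simps split: if_splits)
  define d where "d = 1 - t/(2*m)"
  have d1: "1/2 \<le> d" and d2: "d \<le> 1" using t mpos by (auto simp: d_def field_simps)
  have "a^k / d - exp (-t) = (a^k - exp (-t)) / d + exp (-t) * (1 - d) / d"
    using d1 by (simp add: field_simps)
  hence "\<bar>a^k / d - exp (-t)\<bar> \<le> \<bar>(a^k - exp (-t)) / d\<bar> + \<bar>exp (-t) * (1 - d) / d\<bar>"
    by (metis abs_triangle_ineq)
  also have "\<bar>(a^k - exp (-t)) / d\<bar> = \<bar>a^k - exp (-t)\<bar> / d" using d1 by (simp add: abs_divide)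
  also have "\<bar>exp (-t) * (1 - d) / d\<bar> = exp (-t) * (1 - d) / d" using d1 d2 by simp
  also have "\<bar>a^k - exp (-t)\<bar> / d \<le> (5/m) / (1/2)"
    using diff d1 by (intro frac_le) auto
  also have "exp (-t) * (1 - d) / d \<le> (exp (-t) * (1 - d)) / (1/2)"
    using d1 d2 by (intro divide_left_mono) auto
  also have "(exp (-t) * (1 - d)) / (1/2) = (exp (-t) * t) / m" using mpos by (simp add: d_def field_simps)
  also have "\<dots> \<le> 1/m" using e1 mpos by (simp add: divide_right_mono)
  finally have "\<bar>a^k / d - exp (-t)\<bar> \<le> 5 / m / (1/2) + 1/m" by simp
  also have "5 / m / (1/2) + 1/m = 11/m" by simp
  finally show ?thesis unfolding a_def d_def .
qed

lemma complex_approx: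
  fixes z :: complex and m k :: nat and C :: real
  assumes m: "m \<ge> 1" and k: "m \<le> k" "k \<le> m + 1" and Cm: "C \<le> real m" and z: "cmod z \<le> C"
  shows "cmod ((1 - z/m)^k / (1 - z/(2*m)) - exp (-z))
          \<le> (2 * (2 * exp (2*C+1) * C^2 + exp (C+1) * C) + exp C * C) / m"
proof -
  have mpos: "(0::real) < m" using m by simp
  have C0: "0 \<le> C" using z norm_ge_zero order_trans by blast
  define w where "w = z / of_nat m"
  have nw: "cmod w = cmod z / m" by (simp add: w_def norm_divide)
  have nw1: "cmod w \<le> C / m" using z mpos by (simp add: nw divide_right_mono)
  have nw2: "cmod w \<le> 1" using nw1 Cm mpos by (smt (verit) divide_le_eq_1)
  define u where "u = 1 - w"
  define v where "v = exp (-w)"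
  define R where "R = exp (cmod w)"
  have R1: "1 \<le> R" by (simp add: R_def)
  have nez: "cmod (exp (-z)) \<le> exp C"
  proof -
    have "- Re z \<le> C" using abs_Re_le_cmod[of z] z by linarith
    thus ?thesis by simp
  qed
  have uv: "cmod (u - v) \<le> exp 1 * cmod w ^ 2"
  proof -
    have "cmod (v - u) = cmod (exp (-w) - (\<Sum>i\<le>1. (-w)^i / fact i))"
      by (simp add: u_def v_def)
    also have "\<dots> \<le> exp (cmod (-w)) * cmod (-w) ^ Suc 1 / fact 1" by (rule Taylor_exp_field)
    also have "\<dots> = R * cmod w ^ 2" by (simp add: R_def power2_eq_square)
    also have "\<dots> \<le> exp 1 * cmod w ^ 2" using nw2 by (simp add: R_def mult_right_mono)
    finally show ?thesis by (simp add: norm_minus_commute)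
  qed
  have nu: "cmod u \<le> R"
  proof -
    have "cmod u \<le> 1 + cmod w" unfolding u_def by (metis norm_one norm_triangle_ineq4)
    also have "\<dots> \<le> R" unfolding R_def by (rule exp_ge_add_one_self)
    finally show ?thesis .
  qed
  have nv: "cmod v \<le> R" unfolding v_def R_def using norm_exp[of "-w"] by simp
  have "cmod (u^k - v^k) = R^k * cmod ((u/R)^k - (v/R)^k)"
    using R1 by (simp add: power_divide diff_divide_distrib[symmetric] norm_divide norm_power)
  also have "\<dots> \<le> R^k * (k * cmod (u/R - v/R))"
    using R1 nu nv by (intro mult_left_mono norm_power_diff) (auto simp: norm_divide)
  also have "cmod (u/R - v/R) = cmod (u - v) / R"
    using R1 by (simp add: diff_divide_distrib[symmetric] norm_divide)
  also have "\<dots> \<le> cmod (u - v)" using R1 by (simp add: divide_le_eq mult_le_cancel_left1)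
  finally have F0: "cmod (u^k - v^k) \<le> R^k * (k * cmod (u - v))"
    by (smt (verit) R1 mult_left_mono of_nat_0_le_iff zero_le_power mult_nonneg_nonneg)
  have F1: "R^k \<le> exp (2*C)"
  proof -
    have "R^k = exp (k * cmod w)" by (simp add: R_def flip: exp_of_nat_mult)
    also have "k * cmod w \<le> (2*m) * (C/m)"
      using k nw1 m by (intro mult_mono) auto
    also have "(2*m) * (C/m) = 2*C" using mpos by simp
    finally show ?thesis by simp
  qed
  have F2: "k * cmod (u - v) \<le> (2*m) * (exp 1 * (C/m)^2)"
    using k uv nw1 m by (intro mult_mono order.trans[OF uv] mult_left_mono power_mono) auto
  have A1: "cmod (u^k - v^k) \<le> exp (2*C) * ((2*m) * (exp 1 * (C/m)^2))"
  proof -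
    have "R^k * (k * cmod (u - v)) \<le> exp (2*C) * ((2*m) * (exp 1 * (C/m)^2))"
      by (rule mult_mono[OF F1 F2]) auto
    with F0 show ?thesis by (rule order_trans)
  qed
  have A1': "exp (2*C) * ((2*m) * (exp 1 * (C/m)^2)) = 2 * exp (2*C+1) * C^2 / m"
    using mpos by (simp add: power2_eq_square exp_add field_simps)
  have vk: "v^k = exp (-z) * exp (- (of_nat (k - m) * w))"
  proof -
    have "v^k = exp (of_nat k * (-w))" by (metis exp_of_nat_mult v_def)
    also have "of_nat k * (-w) = -z + (- (of_nat (k - m) * w))"
    proof -
      have e1: "(of_nat k :: complex) = of_nat (k - m) + of_nat m" using k by simp
      have e2: "z = of_nat m * w" using mpos by (simp add: w_def)
      show ?thesis unfolding e1 e2 by (simp add: algebra_simps)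
    qed
    finally show ?thesis by (simp add: exp_add[symmetric])
  qed
  have km: "cmod (of_nat (k - m) * w) \<le> cmod w"
  proof -
    have "k - m \<le> 1" using k by simp
    hence "real (k - m) \<le> 1" by simp
    thus ?thesis by (simp add: norm_mult mult_left_le_one_le)
  qed
  have "cmod (exp (- (of_nat (k - m) * w)) - 1) \<le> exp 1 * (C/m)"
  proof -
    have "cmod (exp (- (of_nat (k - m) * w)) - 1)
        = cmod (exp (- (of_nat (k - m) * w)) - (\<Sum>i\<le>0. (- (of_nat (k - m) * w))^i / fact i))"
      by simp
    also have "\<dots> \<le> exp (cmod (- (of_nat (k - m) * w))) * cmod (- (of_nat (k - m) * w)) ^ Suc 0 / fact 0"
      by (rule Taylor_exp_field)
    also have "\<dots> = exp (cmod (of_nat (k - m) * w)) * cmod (of_nat (k - m) * w)" by simp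
    also have "\<dots> \<le> exp 1 * (C/m)"
      by (rule mult_mono) (use km nw1 nw2 in auto)
    finally show ?thesis .
  qed
  hence A2: "cmod (v^k - exp (-z)) \<le> exp C * (exp 1 * (C/m))"
  proof -
    assume h: "cmod (exp (- (of_nat (k - m) * w)) - 1) \<le> exp 1 * (C/m)"
    have "v^k - exp (-z) = exp (-z) * (exp (- (of_nat (k - m) * w)) - 1)" by (simp add: vk algebra_simps)
    hence eq: "cmod (v^k - exp (-z)) = cmod (exp (-z)) * cmod (exp (- (of_nat (k - m) * w)) - 1)"
      by (simp add: norm_mult)
    show ?thesis unfolding eq by (rule mult_mono[OF nez h]) auto
  qed
  have A2': "exp C * (exp 1 * (C/m)) = exp (C+1) * C / m" by (simp add: exp_add)
  have ukd: "cmod (u^k - exp (-z)) \<le> (2 * exp (2*C+1) * C^2 + exp (C+1) * C) / m"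
  proof -
    have a: "cmod (u^k - v^k) \<le> 2 * exp (2*C+1) * C^2 / m" using A1 unfolding A1' .
    have b: "cmod (v^k - exp (-z)) \<le> exp (C+1) * C / m" using A2 unfolding A2' .
    have "cmod (u^k - exp (-z)) \<le> 2 * exp (2*C+1) * C^2 / m + exp (C+1) * C / m"
      by (rule norm_diff_triangle_le[OF a b])
    thus ?thesis by (simp add: add_divide_distrib)
  qed
  define d where "d = 1 - z/(2*m)"
  have n1d: "cmod (1 - d) \<le> C / (2*m)"
    using z mpos by (simp add: d_def norm_divide divide_right_mono)
  have nd: "1/2 \<le> cmod d"
  proof -
    have "1 - cmod (1 - d) \<le> cmod d" using norm_triangle_ineq2[of 1 "1-d"] by simp
    moreover have "C / (2*m) \<le> 1/2" using Cm mpos by (simp add: field_simps)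
    ultimately show ?thesis using n1d by linarith
  qed
  have d0: "d \<noteq> 0" using nd by auto
  have eq: "u^k / d - exp (-z) = (u^k - exp (-z)) / d + exp (-z) * (1 - d) / d"
    using d0 by (simp add: diff_divide_distrib add_divide_distrib right_diff_distrib)
  have t1: "cmod ((u^k - exp (-z)) / d) \<le> ((2 * exp (2*C+1) * C^2 + exp (C+1) * C) / m) / (1/2)"
    unfolding norm_divide using ukd nd C0 mpos by (intro frac_le) auto
  have t2: "cmod (exp (-z) * (1 - d) / d) \<le> (exp C * (C/(2*m))) / (1/2)"
    unfolding norm_divide norm_mult
  proof (intro frac_le mult_mono)
    show "cmod (exp (-z)) \<le> exp C" by (rule nez)
  qed (use n1d nd C0 mpos in auto)
  have "cmod (u^k / d - exp (-z)) \<le> cmod ((u^k - exp (-z)) / d) + cmod (exp (-z) * (1 - d) / d)"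
    unfolding eq by (rule norm_triangle_ineq)
  also have "\<dots> \<le> ((2 * exp (2*C+1) * C^2 + exp (C+1) * C) / m) / (1/2) + (exp C * (C/(2*m))) / (1/2)"
    by (rule add_mono[OF t1 t2])
  also have "\<dots> = (2 * (2 * exp (2*C+1) * C^2 + exp (C+1) * C) + exp C * C) / m"
    using mpos by (simp add: add_divide_distrib)
  finally show ?thesis by (simp add: u_def w_def d_def)
qed



definition slit :: "complex set" where "slit = - \<real>\<^sub>\<le>\<^sub>0"
definition Sm :: "nat \<Rightarrow> complex set" where "Sm m = slit \<inter> ball 0 (2 * real m)"
definition Phi :: "nat \<Rightarrow> complex \<Rightarrow> complex" where
  "Phi m w = (1 - w / of_nat m) ^ kk m / ((1 - w / (2 * of_nat m)) * w)"
definition Psi :: "complex \<Rightarrow> complex" where "Psi w = exp (- w) / w"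

lemma slit_iff: "w \<in> slit \<longleftrightarrow> \<not> (Im w = 0 \<and> Re w \<le> 0)"
  by (auto simp: slit_def complex_nonpos_Reals_iff)

lemma open_Sm: "open (Sm m)"
  unfolding Sm_def slit_def by (intro open_Int open_ball) (auto intro: closed_nonpos_Reals_complex)

lemma seg_Sm:
  assumes r: "0 < r" "r < 2 * real m" and x: "x \<in> Sm m"
  shows "closed_segment (of_real r) x \<subseteq> Sm m"
proof
  fix y assume y: "y \<in> closed_segment (of_real r) x"
  then obtain u where u: "0 \<le> u" "u \<le> 1" and yu: "y = (1 - u) *\<^sub>R of_real r + u *\<^sub>R x"
    by (auto simp: closed_segment_def)
  have "y \<in> ball 0 (2 * real m)"
  proof -
    have "closed_segment (of_real r) x \<subseteq> ball 0 (2 * real m)"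
      using x r by (intro convex_contains_segment[THEN iffD1, rule_format] convex_ball) (auto simp: Sm_def)
    thus ?thesis using y by blast
  qed
  moreover have "y \<in> slit"
  proof -
    have xs: "\<not> (Im x = 0 \<and> Re x \<le> 0)" using x by (auto simp: Sm_def slit_iff)
    have ImY: "Im y = u * Im x" and ReY: "Re y = (1 - u) * r + u * Re x" by (simp_all add: yu)
    show ?thesis
    proof (cases "Im x = 0")
      case True
      hence "Re x > 0" using xs by auto
      hence "Re y > 0" using u r unfolding ReY
        by (smt (verit) mult_nonneg_nonneg mult_pos_pos)
      thus ?thesis by (simp add: slit_iff)
    next
      case False
      show ?thesis
      proof (cases "u = 0")
        case True thus ?thesis using r by (simp add: slit_iff yu)
      next
        case False
        hence "Im y \<noteq> 0" using \<open>Im x \<noteq> 0\<close> ImY by simp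
        thus ?thesis by (simp add: slit_iff)
      qed
    qed
  qed
  ultimately show "y \<in> Sm m" by (simp add: Sm_def)
qed

lemma starlike_Sm: "m \<ge> 1 \<Longrightarrow> starlike (Sm m)"
  unfolding starlike_def
proof (intro bexI ballI)
  assume m: "m \<ge> 1"
  show "(1::complex) \<in> Sm m" using m by (simp add: Sm_def slit_iff)
  fix x assume "x \<in> Sm m"
  thus "closed_segment 1 x \<subseteq> Sm m" using seg_Sm[of 1 m x] m by simp
qed

lemma Sm_nz: "w \<in> Sm m \<Longrightarrow> w \<noteq> 0" by (auto simp: Sm_def slit_iff)
lemma Sm_d: "w \<in> Sm m \<Longrightarrow> 1 - w / (2 * of_nat m) \<noteq> 0"
proof
  assume w: "w \<in> Sm m" and h: "1 - w / (2 * of_nat m) = 0"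
  have "cmod w < 2 * real m" using w by (simp add: Sm_def)
  hence "0 < real m" using norm_ge_zero[of w] by linarith
  hence "m \<noteq> 0" by simp
  hence "w = 2 * of_nat m" using h by (simp add: field_simps)
  hence "cmod w = 2 * real m" by (simp add: norm_mult)
  thus False using w by (simp add: Sm_def)
qed

lemma holo_Phi: "Phi m holomorphic_on Sm m"
  unfolding Phi_def by (intro holomorphic_intros) (use Sm_nz Sm_d in auto)
lemma holo_Psi: "Psi holomorphic_on Sm m"
  unfolding Psi_def by (intro holomorphic_intros) (use Sm_nz in auto)

lemma prim_Sm:
  assumes "m \<ge> 1" "f holomorphic_on Sm m"
  shows "\<exists>P. \<forall>x\<in>Sm m. (P has_field_derivative f x) (at x)"
proof (rule holomorphic_starlike_primitive[where k = "{}"])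
  show "continuous_on (Sm m) f" using assms(2) holomorphic_on_imp_continuous_on by blast
  show "starlike (Sm m)" using assms(1) by (rule starlike_Sm)
  show "open (Sm m)" by (rule open_Sm)
  show "\<And>x. x \<in> Sm m - {} \<Longrightarrow> f field_differentiable at x"
    using assms(2) open_Sm holomorphic_on_imp_differentiable_at by blast
qed auto

lemma pointwise:
  fixes y :: complex
  assumes m: "m \<ge> 1" and w: "\<i> * of_nat m * (y - \<i>) \<in> Sm m"
  shows "y ^ (2 * Mm m + 2) / (1 + y\<^sup>2)
       = (-1) ^ Mm m * (- (1 / (2 * \<i>))) * Phi m (\<i> * of_nat m * (y - \<i>)) * (\<i> * of_nat m)"
proof -
  define w where "w = \<i> * of_nat m * (y - \<i>)"
  define M where "M = Mm m"
  have mz: "(of_nat m :: complex) \<noteq> 0" using m by simp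
  have wz: "w \<noteq> 0" and dz: "1 - w / (2 * of_nat m) \<noteq> 0" using Sm_nz[of w m] Sm_d[of w m] w by (simp_all add: w_def)
  have h1: "1 - w / of_nat m = - (\<i> * y)" using mz by (simp add: w_def field_simps)
  have h2: "(1 - w / (2 * of_nat m)) * w = of_nat m * (1 + y\<^sup>2) / 2"
    using mz by (simp add: w_def field_simps power2_eq_square)
  have yz: "1 + y\<^sup>2 \<noteq> 0" using h2 wz dz mz by auto
  have h3: "(- (\<i> * y)) ^ (2 * M + 2) = (-1) ^ (M + 1) * y ^ (2 * M + 2)"
  proof -
    have e: "2 * M + 2 = 2 * (M + 1)" by simp
    have "(- (\<i> * y)) ^ (2 * M + 2) = ((- (\<i> * y))\<^sup>2) ^ (M + 1)"
      by (simp only: e power_mult)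
    also have "(- (\<i> * y))\<^sup>2 = - (y\<^sup>2)" by (simp add: power2_eq_square algebra_simps)
    also have "(- (y\<^sup>2)) ^ (M + 1) = (-1) ^ (M + 1) * (y\<^sup>2) ^ (M + 1)"
      by (rule power_minus)
    also have "(y\<^sup>2) ^ (M + 1) = y ^ (2 * M + 2)"
      by (simp only: e power_mult)
    finally show ?thesis .
  qed
  have ph: "Phi m w = (-1) ^ (M + 1) * y ^ (2 * M + 2) / (of_nat m * (1 + y\<^sup>2) / 2)"
    unfolding Phi_def kk_def M_def[symmetric] h1 h2 h3 ..
  have ss: "(-1::complex) ^ M * (-1) ^ M = 1" by (simp flip: power_add)
  have nz: "of_nat m + of_nat m * y\<^sup>2 \<noteq> 0" using mz yz
    by (metis distrib_left mult_eq_0_iff mult.right_neutral)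
  have "y ^ (2 * M + 2) / (1 + y\<^sup>2) = (-1) ^ M * (- (1 / (2 * \<i>))) * 
     ((-1) ^ (M + 1) * y ^ (2 * M + 2) / (of_nat m * (1 + y\<^sup>2) / 2)) * (\<i> * of_nat m)"
    using mz yz ss nz by (simp add: field_simps)
  thus ?thesis unfolding w_def[symmetric] M_def[symmetric] ph .
qed

lemma ftilde_eq:
  assumes m: "m \<ge> 1" and P: "\<forall>x\<in>Sm m. (P has_field_derivative Phi m x) (at x)"
    and z0: "\<i> * of_nat m * (z - \<i>) \<in> Sm m"
  shows "ftilde m z = - (1 / (2 * \<i>)) * (P (\<i> * of_nat m * (z - \<i>)) - P (of_nat m))"
proof -
  define Q where "Q y = (-1) ^ Mm m * (- (1 / (2 * \<i>))) * P (\<i> * of_nat m * (y - \<i>))" for y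
  have segm: "\<i> * of_nat m * (y - \<i>) \<in> Sm m" if y: "y \<in> closed_segment 0 z" for y
  proof -
    obtain u where u: "0 \<le> u" "u \<le> 1" and yu: "y = u *\<^sub>R z"
      using y by (auto simp: closed_segment_def)
    have "\<i> * of_nat m * (y - \<i>) = (1 - u) *\<^sub>R of_real (real m) + u *\<^sub>R (\<i> * of_nat m * (z - \<i>))"
      by (simp add: yu scaleR_conv_of_real algebra_simps)
    also have "\<dots> \<in> closed_segment (of_real (real m)) (\<i> * of_nat m * (z - \<i>))"
      using u by (auto simp: closed_segment_def)
    also have "closed_segment (of_real (real m)) (\<i> * of_nat m * (z - \<i>)) \<subseteq> Sm m"
      using m z0 by (intro seg_Sm) auto
    finally show ?thesis .
  qed
  have deriv: "(Q has_field_derivative (y ^ (2 * Mm m + 2) / (1 + y\<^sup>2))) (at y within closed_segment 0 z)"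
    if y: "y \<in> closed_segment 0 z" for y
  proof -
    have inner: "((\<lambda>y. \<i> * of_nat m * (y - \<i>)) has_field_derivative (\<i> * of_nat m)) (at y)"
      by (auto intro!: derivative_eq_intros)
    have "((\<lambda>y. P (\<i> * of_nat m * (y - \<i>))) has_field_derivative
            Phi m (\<i> * of_nat m * (y - \<i>)) * (\<i> * of_nat m)) (at y)"
      using DERIV_chain2[OF P[rule_format, OF segm[OF y]] inner] .
    hence D: "(Q has_field_derivative (-1) ^ Mm m * (- (1 / (2 * \<i>))) *
            (Phi m (\<i> * of_nat m * (y - \<i>)) * (\<i> * of_nat m))) (at y)"
      unfolding Q_def by (rule DERIV_cmult)
    have eq: "(-1) ^ Mm m * (- (1 / (2 * \<i>))) *
            (Phi m (\<i> * of_nat m * (y - \<i>)) * (\<i> * of_nat m)) = y ^ (2 * Mm m + 2) / (1 + y\<^sup>2)"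
      using pointwise[OF m segm[OF y]] by (simp only: mult.assoc)
    have "(Q has_field_derivative (y ^ (2 * Mm m + 2) / (1 + y\<^sup>2))) (at y)"
      using D unfolding eq .
    thus ?thesis by (rule has_field_derivative_at_within)
  qed
  have "((\<lambda>y. y ^ (2 * Mm m + 2) / (1 + y\<^sup>2)) has_contour_integral (Q z - Q 0)) (linepath 0 z)"
    using contour_integral_primitive[of "closed_segment 0 z" Q, OF deriv, of "linepath 0 z"] by simp
  hence ci: "contour_integral (linepath 0 z) (\<lambda>y. y ^ (2 * Mm m + 2) / (1 + y\<^sup>2)) = Q z - Q 0"
    by (rule contour_integral_unique)
  have ss: "(-1::complex) ^ Mm m * (-1) ^ Mm m = 1" by (simp flip: power_add)
  have "ftilde m z = (-1) ^ Mm m * (Q z - Q 0)" unfolding ftilde_def ci ..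
  also have "\<dots> = ((-1) ^ Mm m * (-1) ^ Mm m) * (- (1 / (2 * \<i>))) * (P (\<i> * of_nat m * (z - \<i>)) - P (of_nat m))"
    unfolding Q_def by (simp add: algebra_simps)
  also have "\<dots> = - (1 / (2 * \<i>)) * (P (\<i> * of_nat m * (z - \<i>)) - P (of_nat m))"
    unfolding ss by simp
  finally show ?thesis .
qed



definition Ann :: "real \<Rightarrow> real \<Rightarrow> complex set" where
  "Ann c C = {w. \<not> (Im w = 0 \<and> Re w \<le> 0) \<and> c \<le> cmod w \<and> cmod w \<le> C}"

lemma polar_in_Ann:
  assumes "c \<le> r" "r \<le> C" "0 < c" "-pi < x" "x < pi"
  shows "of_real r * exp (\<i> * of_real x) \<in> Ann c C"
proof -
  have r: "0 < r" using assms by linarith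
  have n: "cmod (of_real r * exp (\<i> * of_real x)) = r" using r by (simp add: norm_mult)
  have "\<not> (Im (of_real r * exp (\<i> * of_real x)) = 0 \<and> Re (of_real r * exp (\<i> * of_real x)) \<le> 0)"
  proof
    assume h: "Im (of_real r * exp (\<i> * of_real x)) = 0 \<and> Re (of_real r * exp (\<i> * of_real x)) \<le> 0"
    hence "sin x = 0" using r by (simp add: Im_exp)
    hence "x = 0" using sin_eq_0_pi assms by blast
    thus False using h r by simp
  qed
  thus ?thesis using n assms by (simp add: Ann_def)
qed

lemma arc_bound:
  assumes P: "\<forall>x\<in>S. (P has_field_derivative f x) (at x)"
    and AS: "Ann c C \<subseteq> S"
    and B: "\<forall>w\<in>Ann c C. cmod (f w) \<le> B" and B0: "0 \<le> B"
    and c: "0 < c" "c \<le> 1" "1 \<le> C"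
    and z0: "z0 \<in> Ann c C"
  shows "cmod (P z0 - P 1) \<le> B * (pi + C)"
proof -
  define th where "th = Arg z0"
  define rho where "rho = cmod z0"
  define e where "e = exp (\<i> * of_real th)"
  have z0e: "z0 = of_real rho * e"
    using rcis_cmod_Arg[of z0] by (simp add: rho_def e_def th_def rcis_def cis_conv_exp)
  have z0n: "\<not> (Im z0 = 0 \<and> Re z0 \<le> 0)" and rho: "c \<le> rho" "rho \<le> C"
    using z0 by (auto simp: Ann_def rho_def)
  have thb: "-pi < th" "th < pi"
    using Arg_bounded[of z0] Arg_eq_pi[of z0] z0n by (auto simp: th_def)
  have deriv: "\<And>x. x \<in> Ann c C \<Longrightarrow> (P has_field_derivative f x) (at x within Ann c C)"
    using P AS by (blast intro: has_field_derivative_at_within)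
  have e_in: "e \<in> Ann c C" using polar_in_Ann[of c 1 C th] c thb by (simp add: e_def)
  have arc: "cmod (P e - P 1) \<le> B * pi"
  proof (cases "0 \<le> th")
    case True
    let ?g = "part_circlepath 0 1 0 th"
    have img: "path_image ?g \<subseteq> Ann c C"
    proof
      fix w assume "w \<in> path_image ?g"
      then obtain x where x: "0 \<le> x" "x \<le> th" "w = exp (\<i> * of_real x)"
        using True by (auto simp: path_image_part_circlepath)
      show "w \<in> Ann c C" using polar_in_Ann[of c 1 C x] c thb x by simp
    qed
    have "(f has_contour_integral (P e - P 1)) ?g"
      using contour_integral_primitive[OF deriv, of ?g] img by (simp add: e_def)
    hence "cmod (P e - P 1) \<le> B * 1 * (th - 0)"
      by (rule has_contour_integral_bound_part_circlepath) (use B0 True img B in auto)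
    thus ?thesis using thb B0 by (smt (verit) mult_left_mono)
  next
    case False
    let ?g = "part_circlepath 0 1 th 0"
    have img: "path_image ?g \<subseteq> Ann c C"
    proof
      fix w assume "w \<in> path_image ?g"
      then obtain x where x: "th \<le> x" "x \<le> 0" "w = exp (\<i> * of_real x)"
        using False by (auto simp: path_image_part_circlepath)
      show "w \<in> Ann c C" using polar_in_Ann[of c 1 C x] c thb x by simp
    qed
    have "(f has_contour_integral (P 1 - P e)) ?g"
      using contour_integral_primitive[OF deriv, of ?g] img by (simp add: e_def)
    hence "cmod (P 1 - P e) \<le> B * 1 * (0 - th)"
      by (rule has_contour_integral_bound_part_circlepath) (use B0 False img B in auto)
    thus ?thesis using thb B0 by (smt (verit) mult_left_mono norm_minus_commute)
  qed
  have rad: "cmod (P z0 - P e) \<le> B * C"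
  proof -
    have img: "closed_segment e z0 \<subseteq> Ann c C"
    proof
      fix w assume "w \<in> closed_segment e z0"
      then obtain u where u: "0 \<le> u" "u \<le> 1" and wu: "w = (1 - u) *\<^sub>R e + u *\<^sub>R z0"
        by (auto simp: closed_segment_def)
      define r where "r = (1 - u) + u * rho"
      have wr: "w = of_real r * e" by (simp add: wu z0e r_def scaleR_conv_of_real algebra_simps)
      have a1: "(1 - u) * c \<le> (1 - u) * 1" "u * c \<le> u * rho"
        "(1 - u) * 1 \<le> (1 - u) * C" "u * rho \<le> u * C"
        using u rho c by (intro mult_left_mono; simp)+
      have "c \<le> r" "r \<le> C" using a1 unfolding r_def by (simp_all add: algebra_simps)

      thus "w \<in> Ann c C" using polar_in_Ann[of c r C th] c thb wr by (simp add: e_def)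
    qed
    have "(f has_contour_integral (P z0 - P e)) (linepath e z0)"
      using contour_integral_primitive[OF deriv, of "linepath e z0"] img by simp
    hence "cmod (P z0 - P e) \<le> B * cmod (z0 - e)"
      by (rule has_contour_integral_bound_linepath) (use B0 img B in auto)
    also have "cmod (z0 - e) = \<bar>rho - 1\<bar>"
    proof -
      have "z0 - e = of_real (rho - 1) * e" by (simp add: z0e algebra_simps)
      thus ?thesis by (simp add: norm_mult e_def del: of_real_diff)
    qed
    also have "B * \<bar>rho - 1\<bar> \<le> B * C" using rho c B0 by (intro mult_left_mono) auto
    finally show ?thesis .
  qed
  have "cmod (P z0 - P 1) \<le> B * C + B * pi" by (rule norm_diff_triangle_le[OF rad arc])
  thus ?thesis by (simp add: algebra_simps)
qed



lemma exp_neg_of_real: "exp (- complex_of_real x) = of_real (exp (- x))"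
  by (metis exp_of_real of_real_minus)

lemma integrable_tail:
  fixes b :: real
  assumes b: "1 \<le> b"
  shows "(\<lambda>t. exp (- t) / t) integrable_on {b..}"
proof (rule measurable_bounded_by_integrable_imp_integrable)
  show "(\<lambda>t. exp (- t) / t) \<in> borel_measurable (lebesgue_on {b..})"
  proof (rule continuous_imp_measurable_on_sets_lebesgue)
    show "continuous_on {b..} (\<lambda>t. exp (- t) / t)" using b by (auto intro!: continuous_intros)
    show "{b..} \<in> sets lebesgue" using lebesgue_measurable_vimage_borel[of "\<lambda>x::real. x" "{b..}"] by simp
  qed
  show "(\<lambda>t. exp (- 1 * t)) integrable_on {b..}" by (rule integrable_on_exp_minus_to_infinity) simp
  show "{b..} \<in> sets lebesgue" using lebesgue_measurable_vimage_borel[of "\<lambda>x::real. x" "{b..}"] by simp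
  fix t assume t: "t \<in> {b..}"
  hence "1 \<le> t" using b by simp
  thus "norm (exp (- t) / t) \<le> exp (- 1 * t)" by (simp add: divide_le_eq mult_le_cancel_left1)
qed

lemma E1_split:
  fixes a :: real
  assumes a: "1 \<le> a"
  shows "\<bar>E1one - integral {1..a} (\<lambda>t. exp (- t) / t)\<bar> \<le> exp (- a)"
proof -
  let ?f = "\<lambda>t::real. exp (- t) / t"
  have i1: "(?f has_integral integral {1..a} ?f) {1..a}"
    by (intro integrable_integral integrable_continuous_interval continuous_intros) auto
  have i2: "(?f has_integral integral {a..} ?f) {a..}"
    using integrable_tail[OF a] by (rule integrable_integral)
  have "(?f has_integral (integral {1..a} ?f + integral {a..} ?f)) ({1..a} \<union> {a..})"
    by (rule has_integral_Un[OF i1 i2]) (use a in \<open>auto intro: negligible_subset[OF negligible_sing[of a]]\<close>)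
  moreover have "{1..a} \<union> {a..} = {1::real..}" using a by auto
  ultimately have "E1one = integral {1..a} ?f + integral {a..} ?f"
    unfolding E1one_def by (simp add: integral_unique)
  moreover have "0 \<le> integral {a..} ?f"
    by (rule integral_nonneg[OF integrable_tail[OF a]]) (use a in auto)
  moreover have "integral {a..} ?f \<le> integral {a..} (\<lambda>t. exp (- 1 * t))"
  proof (rule integral_le[OF integrable_tail[OF a]])
    show "(\<lambda>t. exp (- 1 * t)) integrable_on {a..}" by (rule integrable_on_exp_minus_to_infinity) simp
    fix t assume t: "t \<in> {a..}"
    hence "1 \<le> t" using a by simp
    thus "exp (- t) / t \<le> exp (- 1 * t)" by (simp add: divide_le_eq mult_le_cancel_left1)
  qed
  moreover have "integral {a..} (\<lambda>t. exp (- 1 * t)) = exp (- a)"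
    using has_integral_exp_minus_to_infinity[of 1 a] by (simp add: integral_unique)
  ultimately show ?thesis by simp
qed

lemma m_in_Sm: "m \<ge> 1 \<Longrightarrow> (of_nat m :: complex) \<in> Sm m"
  by (simp add: Sm_def slit_iff)

lemma line_integral:
  assumes m: "m \<ge> 2" and P: "\<forall>x\<in>Sm m. (P has_field_derivative f x) (at x)"
  shows "((\<lambda>x. f (of_real x)) has_integral (P (of_nat m) - P 1)) {1..real m}"
proof -
  have seg: "closed_segment 1 (of_nat m) \<subseteq> Sm m"
    using seg_Sm[of 1 m "of_nat m"] m m_in_Sm[of m] by simp
  have "(f has_contour_integral (P (of_nat m) - P 1)) (linepath 1 (of_nat m))"
    using contour_integral_primitive[of "Sm m" P f "linepath 1 (of_nat m)"] P seg
    by (auto intro: has_field_derivative_at_within)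
  thus ?thesis using m by (subst (asm) has_contour_integral_linepath_Reals_iff) auto
qed

lemma line_diff:
  assumes m: "m \<ge> 2"
    and P: "\<forall>x\<in>Sm m. (P has_field_derivative Phi m x) (at x)"
    and R: "\<forall>x\<in>Sm m. (R has_field_derivative Psi x) (at x)"
  shows "cmod ((P (of_nat m) - P 1) - (R (of_nat m) - R 1)) \<le> 11 * ln (real m) / real m"
proof -
  have mpos: "(0::real) < m" using m by simp
  let ?D = "\<lambda>x::real. Phi m (of_real x) - Psi (of_real x)"
  have hD: "(?D has_integral ((P (of_nat m) - P 1) - (R (of_nat m) - R 1))) {1..real m}"
    by (rule has_integral_diff[OF line_integral[OF m P] line_integral[OF m R]])
  have hg: "((\<lambda>x. 11 / (real m * x)) has_integral (11 * ln (real m) / real m)) {1..real m}"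
  proof -
    have "((\<lambda>x. 11 / (real m * x)) has_integral (11 * ln (real m) / real m - 11 * ln 1 / real m)) {1..real m}"
    proof (rule fundamental_theorem_of_calculus)
      show "1 \<le> real m" using m by simp
      fix x assume x: "x \<in> {1..real m}"
      have "((\<lambda>x. 11 * ln x / real m) has_real_derivative (11 * (1 / x) / real m)) (at x)"
        using x by (auto intro!: derivative_eq_intros)
      hence "((\<lambda>x. 11 * ln x / real m) has_real_derivative (11 / (real m * x))) (at x)"
        by (simp add: field_simps)
      thus "((\<lambda>x. 11 * ln x / real m) has_vector_derivative (11 / (real m * x))) (at x within {1..real m})"
        by (simp add: has_real_derivative_iff_has_vector_derivative[symmetric] has_field_derivative_at_within)
    qed
    thus ?thesis by simp
  qed
  have bound: "norm (?D x) \<le> 11 / (real m * x)" if x: "x \<in> {1..real m}" for x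
  proof -
    have x1: "1 \<le> x" "x \<le> real m" using x by auto
    have "?D x = of_real (((1 - x / m) ^ kk m / (1 - x / (2 * m)) - exp (- x)) / x)"
      by (simp add: Phi_def Psi_def diff_divide_distrib exp_neg_of_real)
    hence "norm (?D x) = \<bar>((1 - x / m) ^ kk m / (1 - x / (2 * m)) - exp (- x)) / x\<bar>"
      by (simp only: norm_of_real)
    also have "\<dots> = \<bar>(1 - x / m) ^ kk m / (1 - x / (2 * m)) - exp (- x)\<bar> / x"
      using x1 by (simp add: abs_divide)
    also have "\<dots> \<le> (11 / m) / x"
      using real_approx[of m "kk m" x] kk_bounds[of m] m x1 by (intro divide_right_mono) auto
    also have "\<dots> = 11 / (real m * x)" by simp
    finally show ?thesis .
  qed
  have "norm (integral {1..real m} ?D) \<le> integral {1..real m} (\<lambda>x. 11 / (real m * x))"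
    by (rule integral_norm_bound_integral) (use hD hg bound in auto)
  thus ?thesis using hD hg by (simp add: integral_unique)
qed

lemma Psi_line:
  assumes m: "m \<ge> 2" and R: "\<forall>x\<in>Sm m. (R has_field_derivative Psi x) (at x)"
  shows "R (of_nat m) - R 1 = of_real (integral {1..real m} (\<lambda>t. exp (- t) / t))"
proof -
  have h1: "((\<lambda>x. Psi (of_real x)) has_integral (R (of_nat m) - R 1)) {1..real m}"
    by (rule line_integral[OF m R])
  have "((\<lambda>t. exp (- t) / t) has_integral integral {1..real m} (\<lambda>t. exp (- t) / t)) {1..real m}"
    by (intro integrable_integral integrable_continuous_interval continuous_intros) auto
  hence "((\<lambda>x. of_real (exp (- x) / x) :: complex) has_integral of_real (integral {1..real m} (\<lambda>t. exp (- t) / t))) {1..real m}"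
    by (rule has_integral_of_real)
  moreover have "(\<lambda>x. of_real (exp (- x) / x) :: complex) = (\<lambda>x. Psi (of_real x))"
    by (auto simp: Psi_def exp_neg_of_real)
  ultimately show ?thesis using h1 has_integral_unique by metis
qed



lemma Phi_Psi_bound:
  assumes m: "m \<ge> 1" and Cm: "C \<le> real m" and c: "0 < c" and w: "w \<in> Ann c C"
  shows "cmod (Phi m w - Psi w) \<le> (2 * (2 * exp (2*C+1) * C^2 + exp (C+1) * C) + exp C * C) / m / c"
proof -
  have wz: "w \<noteq> 0" and wc: "c \<le> cmod w" and wC: "cmod w \<le> C" using w c by (auto simp: Ann_def)
  have "Phi m w - Psi w = ((1 - w/m)^kk m / (1 - w/(2*m)) - exp (-w)) / w"
    by (simp add: Phi_def Psi_def diff_divide_distrib divide_divide_eq_left mult.commute)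
  hence "cmod (Phi m w - Psi w) = cmod ((1 - w/m)^kk m / (1 - w/(2*m)) - exp (-w)) / cmod w"
    by (simp add: norm_divide)
  also have "\<dots> \<le> ((2 * (2 * exp (2*C+1) * C^2 + exp (C+1) * C) + exp C * C) / m) / c"
    using complex_approx[OF m _ _ Cm wC, of "kk m"] kk_bounds[OF m] wc c order_trans[OF norm_ge_zero wC]
    by (intro frac_le) (auto intro!: divide_nonneg_nonneg add_nonneg_nonneg mult_nonneg_nonneg)
  finally show ?thesis by simp
qed

lemma Psi_bound:
  assumes c: "0 < c" and w: "w \<in> Ann c C"
  shows "cmod (Psi w) \<le> exp C / c"
proof -
  have wc: "c \<le> cmod w" and wC: "cmod w \<le> C" using w by (auto simp: Ann_def)
  have "cmod (exp (-w)) \<le> exp C"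
  proof -
    have "- Re w \<le> C" using abs_Re_le_cmod[of w] wC by linarith
    thus ?thesis by simp
  qed
  thus ?thesis unfolding Psi_def norm_divide using wc c by (intro frac_le) auto
qed

lemma main_fixed_m:
  fixes c C :: real and m :: nat and z :: complex
  assumes cC: "0 < c" "c < 1" "1 < C" and m3: "m \<ge> 3" and Cm: "C \<le> real m"
    and zc: "c / real m \<le> cmod (z - \<i>)" "cmod (z - \<i>) \<le> C / real m" and zr: "z \<notin> upper_ray"
  defines "K1 \<equiv> (2 * (2 * exp (2*C+1) * C^2 + exp (C+1) * C) + exp C * C)"
  defines "K2 \<equiv> K1 * (pi + C) / c + 12"
  shows "\<exists>A. cmod A \<le> exp C / c * (pi + C) \<and>
           (\<forall>\<gamma>. valid_path \<gamma> \<and> pathstart \<gamma> = 1 \<and>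
                   pathfinish \<gamma> = \<i> * of_nat m * (z - \<i>) \<and>
                   path_image \<gamma> \<subseteq> {\<zeta>. \<not> (Im \<zeta> = 0 \<and> Re \<zeta> \<le> 0) \<and> c \<le> cmod \<zeta> \<and> cmod \<zeta> \<le> C}
                 \<longrightarrow> contour_integral \<gamma> (\<lambda>\<zeta>. exp (- \<zeta>) / \<zeta>) = A) \<and>
           cmod (ftilde m z - (complex_of_real E1one / (2 * \<i>) - A / (2 * \<i>))) \<le> K2 * ln (real m) / real m"
proof -
  have m1: "m \<ge> 1" and m2: "m \<ge> 2" using m3 by auto
  have mpos: "(0::real) < m" using m3 by simp
  define z0 where "z0 = \<i> * of_nat m * (z - \<i>)"
  have nz0: "cmod z0 = real m * cmod (z - \<i>)" by (simp add: z0_def norm_mult)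
  have z0c: "c \<le> cmod z0" using zc(1) mpos by (simp add: nz0 field_simps)
  have z0C: "cmod z0 \<le> C" using zc(2) mpos by (simp add: nz0 field_simps)
  have z0s: "\<not> (Im z0 = 0 \<and> Re z0 \<le> 0)"
  proof
    assume h: "Im z0 = 0 \<and> Re z0 \<le> 0"
    have e1: "Im z0 = real m * Re z" and e2: "Re z0 = real m * (1 - Im z)" by (simp_all add: z0_def algebra_simps)
    have rz: "Re z = 0" using e1 h mpos by simp
    have "real m * (1 - Im z) \<le> 0" using e2 h by simp
    hence "1 \<le> Im z" using mpos by (simp add: mult_le_0_iff)
    hence "z = \<i> * of_real (Im z)" using rz by (simp add: complex_eq_iff)
    hence "z \<in> upper_ray" using \<open>1 \<le> Im z\<close> unfolding upper_ray_def by blast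
    thus False using zr by simp
  qed
  have z0A: "z0 \<in> Ann c C" using z0c z0C z0s by (simp add: Ann_def)
  have AS: "Ann c C \<subseteq> Sm m"
  proof
    fix w assume "w \<in> Ann c C"
    thus "w \<in> Sm m" using Cm cC by (auto simp: Ann_def Sm_def slit_iff)
  qed
  have z0S: "z0 \<in> Sm m" using z0A AS by blast
  obtain P where P: "\<forall>x\<in>Sm m. (P has_field_derivative Phi m x) (at x)"
    using prim_Sm[OF m1 holo_Phi] by blast
  obtain R where R: "\<forall>x\<in>Sm m. (R has_field_derivative Psi x) (at x)"
    using prim_Sm[OF m1 holo_Psi] by blast
  define A where "A = R z0 - R 1"
  have PD: "\<forall>x\<in>Sm m. ((\<lambda>x. P x - R x) has_field_derivative (Phi m x - Psi x)) (at x)"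
    using P R by (auto intro: DERIV_diff)
  have A_bound: "cmod A \<le> exp C / c * (pi + C)"
    unfolding A_def
    by (rule arc_bound[OF R AS]) (use Psi_bound[OF cC(1)] cC z0A in auto)
  have ci: "contour_integral \<gamma> (\<lambda>\<zeta>. exp (- \<zeta>) / \<zeta>) = A"
    if g: "valid_path \<gamma>" "pathstart \<gamma> = 1" "pathfinish \<gamma> = z0"
      "path_image \<gamma> \<subseteq> {\<zeta>. \<not> (Im \<zeta> = 0 \<and> Re \<zeta> \<le> 0) \<and> c \<le> cmod \<zeta> \<and> cmod \<zeta> \<le> C}" for \<gamma>
  proof -
    have "path_image \<gamma> \<subseteq> Sm m" using g(4) AS by (auto simp: Ann_def)
    hence "(Psi has_contour_integral (R (pathfinish \<gamma>) - R (pathstart \<gamma>))) \<gamma>"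
      using contour_integral_primitive[of "Sm m" R Psi \<gamma>] R g(1) by (auto intro: has_field_derivative_at_within)
    hence "contour_integral \<gamma> Psi = A" unfolding A_def g(2,3) by (rule contour_integral_unique)
    thus ?thesis by (simp add: Psi_def[abs_def])
  qed
  have ft: "ftilde m z = - (1 / (2 * \<i>)) * (P z0 - P (of_nat m))"
    using ftilde_eq[OF m1 P] z0S by (simp add: z0_def)
  define X1 where "X1 = (P z0 - R z0) - (P 1 - R 1)"
  define X2 where "X2 = (P (of_nat m) - P 1) - (R (of_nat m) - R 1)"
  define X3 where "X3 = complex_of_real E1one - (R (of_nat m) - R 1)"
  have decomp: "ftilde m z - (complex_of_real E1one / (2 * \<i>) - A / (2 * \<i>)) = - (1 / (2 * \<i>)) * (X1 - X2 + X3)"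
    unfolding ft X1_def X2_def X3_def A_def by (simp add: field_simps)
  have lnm: "1 \<le> ln (real m)"
  proof -
    have "exp 1 \<le> real m" using exp_le m3 by linarith
    thus ?thesis using mpos by (simp add: ln_ge_iff)
  qed
  have K1pos: "0 \<le> K1" unfolding K1_def using cC by (intro add_nonneg_nonneg mult_nonneg_nonneg) auto
  have bX1: "cmod X1 \<le> K1 / m / c * (pi + C)"
    unfolding X1_def
    by (rule arc_bound[OF PD AS]) (use Phi_Psi_bound[OF m1 Cm cC(1)] cC z0A K1pos mpos in \<open>auto simp: K1_def\<close>)
  have bX2: "cmod X2 \<le> 11 * ln (real m) / real m" unfolding X2_def by (rule line_diff[OF m2 P R])
  have bX3: "cmod X3 \<le> 1 / real m"
  proof -
    have "X3 = of_real (E1one - integral {1..real m} (\<lambda>t. exp (- t) / t))"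
      unfolding X3_def Psi_line[OF m2 R] by simp
    hence "cmod X3 = \<bar>E1one - integral {1..real m} (\<lambda>t. exp (- t) / t)\<bar>" by (simp only: norm_of_real)
    also have "\<dots> \<le> exp (- real m)" using E1_split[of "real m"] m1 by simp
    also have "\<dots> \<le> 1 / real m"
    proof -
      have "real m \<le> exp (real m)" using exp_ge_add_one_self[of "real m"] by linarith
      thus ?thesis using mpos by (simp add: exp_minus field_simps)
    qed
    finally show ?thesis .
  qed
  have "cmod (ftilde m z - (complex_of_real E1one / (2 * \<i>) - A / (2 * \<i>))) = cmod (X1 - X2 + X3) / 2"
    unfolding decomp by (simp add: norm_mult norm_divide)
  also have "\<dots> \<le> (cmod X1 + cmod X2 + cmod X3) / 2"
    by (intro divide_right_mono) (simp_all add: norm_triangle_le norm_triangle_ineq4 order_trans[OF norm_triangle_ineq])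
  also have "\<dots> \<le> (K1 / m / c * (pi + C) + 11 * ln (real m) / real m + 1 / real m) / 2"
    by (rule divide_right_mono[OF add_mono[OF add_mono[OF bX1 bX2] bX3]]) simp
  also have "\<dots> \<le> K2 * ln (real m) / real m"
  proof -
    have a: "K1 / m / c * (pi + C) \<le> K1 * (pi + C) / c * ln (real m) / real m"
    proof -
      have h: "K1 * (pi + C) / c * 1 \<le> K1 * (pi + C) / c * ln (real m)"
        using lnm K1pos cC by (intro mult_left_mono) auto
      have "K1 / m / c * (pi + C) = (K1 * (pi + C) / c * 1) / m" by simp
      also have "\<dots> \<le> (K1 * (pi + C) / c * ln (real m)) / m" by (rule divide_right_mono[OF h]) simp
      finally show ?thesis .
    qed
    have b: "1 / real m \<le> ln (real m) / real m" using lnm mpos by (simp add: divide_right_mono)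
    have c0: "0 \<le> K2 * ln (real m) / real m" using lnm mpos K1pos cC
      unfolding K2_def by (intro divide_nonneg_nonneg mult_nonneg_nonneg add_nonneg_nonneg) auto
    have "K1 / m / c * (pi + C) + 11 * ln (real m) / real m + 1 / real m
          \<le> K1 * (pi + C) / c * ln (real m) / real m + 12 * ln (real m) / real m"
      using a b by simp
    also have "\<dots> = K2 * ln (real m) / real m" unfolding K2_def using cC mpos by (simp add: field_simps)
    finally have "K1 / m / c * (pi + C) + 11 * ln (real m) / real m + 1 / real m \<le> K2 * ln (real m) / real m" .
    hence s2: "(K1 / m / c * (pi + C) + 11 * ln (real m) / real m + 1 / real m) / 2 \<le> (K2 * ln (real m) / real m) / 2"
      by (rule divide_right_mono) simp
    have "(K2 * ln (real m) / real m) / 2 \<le> K2 * ln (real m) / real m" using c0 by simp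
    with s2 show ?thesis by (rule order_trans)
  qed
  finally have main: "cmod (ftilde m z - (complex_of_real E1one / (2 * \<i>) - A / (2 * \<i>))) \<le> K2 * ln (real m) / real m" .
  show ?thesis using A_bound ci main unfolding z0_def by blast
qed

theorem lemma3:
  fixes c C :: real
  assumes "0 < c" "c < 1" "1 < C"
  shows "\<exists>K N. \<forall>m \<ge> N. \<forall>z.
           c / real m \<le> cmod (z - \<i>) \<and> cmod (z - \<i>) \<le> C / real m \<and> z \<notin> upper_ray \<longrightarrow>
             cmod (ftilde m z) \<le> K \<and>
             (\<forall>\<gamma>. valid_path \<gamma> \<and> pathstart \<gamma> = 1 \<and>
                   pathfinish \<gamma> = \<i> * of_nat m * (z - \<i>) \<and>
                   path_image \<gamma> \<subseteq> {\<zeta>. \<not> (Im \<zeta> = 0 \<and> Re \<zeta> \<le> 0) \<and> c \<le> cmod \<zeta> \<and> cmod \<zeta> \<le> C}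
                 \<longrightarrow> cmod (ftilde m z
                        - (complex_of_real E1one / (2 * \<i>)
                           - contour_integral \<gamma> (\<lambda>\<zeta>. exp (- \<zeta>) / \<zeta>) / (2 * \<i>)))
                     \<le> K * ln (real m) / real m)"
proof -
  define K1 where "K1 = (2 * (2 * exp (2*C+1) * C^2 + exp (C+1) * C) + exp C * C)"
  define K2 where "K2 = K1 * (pi + C) / c + 12"
  define K where "K = K2 + \<bar>E1one\<bar> + exp C / c * (pi + C)"
  have K1pos: "0 \<le> K1" unfolding K1_def using assms by (intro add_nonneg_nonneg mult_nonneg_nonneg) auto
  have K2pos: "0 \<le> K2" unfolding K2_def using assms K1pos by (intro add_nonneg_nonneg divide_nonneg_nonneg mult_nonneg_nonneg) auto
  have KK2: "K2 \<le> K" unfolding K_def using assms by (smt (verit) divide_nonneg_nonneg exp_ge_zero mult_nonneg_nonneg pi_gt_zero)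
  show ?thesis
  proof (intro exI allI impI)
    fix m :: nat and z :: complex
    assume m: "nat \<lceil>C\<rceil> + 3 \<le> m"
    assume z: "c / real m \<le> cmod (z - \<i>) \<and> cmod (z - \<i>) \<le> C / real m \<and> z \<notin> upper_ray"
    have m3: "m \<ge> 3" using m by simp
    have Cm: "C \<le> real m" using m by linarith
    have mpos: "(0::real) < m" using m3 by simp
    obtain A where A: "cmod A \<le> exp C / c * (pi + C)"
      and ci: "\<forall>\<gamma>. valid_path \<gamma> \<and> pathstart \<gamma> = 1 \<and>
                   pathfinish \<gamma> = \<i> * of_nat m * (z - \<i>) \<and>
                   path_image \<gamma> \<subseteq> {\<zeta>. \<not> (Im \<zeta> = 0 \<and> Re \<zeta> \<le> 0) \<and> c \<le> cmod \<zeta> \<and> cmod \<zeta> \<le> C}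
                 \<longrightarrow> contour_integral \<gamma> (\<lambda>\<zeta>. exp (- \<zeta>) / \<zeta>) = A"
      and D: "cmod (ftilde m z - (complex_of_real E1one / (2 * \<i>) - A / (2 * \<i>))) \<le> K2 * ln (real m) / real m"
      using main_fixed_m[OF assms m3 Cm] z unfolding K2_def K1_def by blast
    have lnm0: "0 \<le> ln (real m) / real m" using m3 by simp
    have lnm1: "ln (real m) / real m \<le> 1"
    proof -
      have "ln (real m) \<le> real m - 1" using mpos by (rule ln_le_minus_one)
      thus ?thesis using mpos by (simp add: divide_le_eq)
    qed
    have D2: "cmod (ftilde m z - (complex_of_real E1one / (2 * \<i>) - A / (2 * \<i>))) \<le> K * ln (real m) / real m"
    proof -
      have "K2 * ln (real m) / real m \<le> K * ln (real m) / real m"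
        using KK2 lnm0 by (simp add: mult_right_mono divide_right_mono times_divide_eq_right[symmetric] del: times_divide_eq_right)
      with D show ?thesis by (rule order_trans)
    qed
    show "cmod (ftilde m z) \<le> K \<and>
             (\<forall>\<gamma>. valid_path \<gamma> \<and> pathstart \<gamma> = 1 \<and>
                   pathfinish \<gamma> = \<i> * of_nat m * (z - \<i>) \<and>
                   path_image \<gamma> \<subseteq> {\<zeta>. \<not> (Im \<zeta> = 0 \<and> Re \<zeta> \<le> 0) \<and> c \<le> cmod \<zeta> \<and> cmod \<zeta> \<le> C}
                 \<longrightarrow> cmod (ftilde m z
                        - (complex_of_real E1one / (2 * \<i>)
                           - contour_integral \<gamma> (\<lambda>\<zeta>. exp (- \<zeta>) / \<zeta>) / (2 * \<i>)))
                     \<le> K * ln (real m) / real m)"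
    proof
      have t1: "K2 * ln (real m) / real m \<le> K2"
        using K2pos lnm1 by (simp add: mult_left_le times_divide_eq_right[symmetric] del: times_divide_eq_right)
      have t2: "cmod (complex_of_real E1one / (2 * \<i>) - A / (2 * \<i>)) \<le> \<bar>E1one\<bar> + exp C / c * (pi + C)"
      proof -
        have "cmod (complex_of_real E1one / (2 * \<i>) - A / (2 * \<i>)) \<le> cmod (complex_of_real E1one / (2 * \<i>)) + cmod (A / (2 * \<i>))"
          by (rule norm_triangle_ineq4)
        also have "\<dots> = \<bar>E1one\<bar> / 2 + cmod A / 2" by (simp add: norm_divide norm_mult)
        also have "\<dots> \<le> \<bar>E1one\<bar> + exp C / c * (pi + C)" using A abs_ge_zero[of E1one] norm_ge_zero[of A] by linarith
        finally show ?thesis .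
      qed
      have "cmod (ftilde m z) \<le> cmod (ftilde m z - (complex_of_real E1one / (2 * \<i>) - A / (2 * \<i>)))
               + cmod (complex_of_real E1one / (2 * \<i>) - A / (2 * \<i>))"
        using norm_triangle_sub[of "ftilde m z" "complex_of_real E1one / (2 * \<i>) - A / (2 * \<i>)"] by linarith
      also have "\<dots> \<le> K2 + (\<bar>E1one\<bar> + exp C / c * (pi + C))"
        using D t1 t2 by linarith
      finally show "cmod (ftilde m z) \<le> K" unfolding K_def by simp
    next
      show "\<forall>\<gamma>. valid_path \<gamma> \<and> pathstart \<gamma> = 1 \<and>
                   pathfinish \<gamma> = \<i> * of_nat m * (z - \<i>) \<and>
                   path_image \<gamma> \<subseteq> {\<zeta>. \<not> (Im \<zeta> = 0 \<and> Re \<zeta> \<le> 0) \<and> c \<le> cmod \<zeta> \<and> cmod \<zeta> \<le> C}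
                 \<longrightarrow> cmod (ftilde m z
                        - (complex_of_real E1one / (2 * \<i>)
                           - contour_integral \<gamma> (\<lambda>\<zeta>. exp (- \<zeta>) / \<zeta>) / (2 * \<i>)))
                     \<le> K * ln (real m) / real m"
        using ci D2 by auto
    qed
  qed
qed


end
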